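(* Let $F_2$ be the free group on generators $a,b$, let $H\leq F_2$ be a subgroup of finite index that contains an element of odd length, and let $y\in F_2$. Then there exist constants $a_{i,xH}$ (for $i\geq 1$, $xH\in F_2/H$) and an $N\in\mathbb{N}$ such that \[ |yH\cap S_n| = \sum_{i=1}^{N}\sum_{xH\in F_2/H}a_{i,xH}\cdot |xH\cap S_{n-i}| \] for all $n\geq N+1$.
   Context: Let $\Xi=\{a,b,a^{-1},b^{-1}\}$. An element $g\in F_2$ has length $n$ if $g=x_1x_2\cdots x_n$ with $x_i\in\Xi$ and $x_{i+1}\neq x_i^{-1}$ for each $i$ (reduced form); the identity has length $0$. For $n\geq 0$, $S_n\subseteq F_2$ denotes the set of elements of length $n$. The constants $a_{i,xH}$ and $N$ do not depend on $n$. *)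

theory Defs
  imports Complex_Main "HOL-Algebra.Coset"
begin

text \<open>The free group F_2 on generators a, b, modelled by reduced words.
A letter is a pair (g, e): generator g with e = True meaning the inverse g^-1.\<close>

datatype gen = Ga | Gb

type_synonym letter = "gen \<times> bool"

definition inv_letter :: "letter \<Rightarrow> letter" where
  "inv_letter x = (fst x, \<not> snd x)"

fun reduced :: "letter list \<Rightarrow> bool" where
  "reduced [] = True"
| "reduced [x] = True"
| "reduced (x # y # xs) = (y \<noteq> inv_letter x \<and> reduced (y # xs))"

fun red_cons :: "letter \<Rightarrow> letter list \<Rightarrow> letter list" where
  "red_cons x [] = [x]"
| "red_cons x (y # ys) = (if y = inv_letter x then ys else x # y # ys)"

definition reduce :: "letter list \<Rightarrow> letter list" where
  "reduce w = foldr red_cons w []"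

definition F2 :: "letter list monoid" where
  "F2 = \<lparr> carrier = {w. reduced w}, monoid.mult = (\<lambda>w v. reduce (w @ v)), one = [] \<rparr>"

definition sphere :: "nat \<Rightarrow> letter list set" where
  "sphere n = {w \<in> carrier F2. length w = n}"

definition left_cosets :: "letter list set \<Rightarrow> letter list set set" where
  "left_cosets H = {x <#\<^bsub>F2\<^esub> H | x. x \<in> carrier F2}"

end

theory Submission
  imports Defs
begin

lemma UNIV_gen: "(UNIV :: gen set) = {Ga, Gb}"
  using gen.exhaust by auto

lemma UNIV_letter: "(UNIV :: letter set) = {(Ga,True),(Ga,False),(Gb,True),(Gb,False)}"
  using UNIV_gen by auto

lemma finite_letter: "finite (UNIV :: letter set)"
  by (simp add: UNIV_letter)

lemma card_letter: "card (UNIV :: letter set) = 4"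
  by (simp add: UNIV_letter)

lemma inv_inv [simp]: "inv_letter (inv_letter x) = x"
  by (simp add: inv_letter_def)

lemma inv_neq [simp]: "inv_letter x \<noteq> x"
  by (cases x) (simp add: inv_letter_def)

lemma reduced_tl: "reduced (x # w) \<Longrightarrow> reduced w"
  by (cases w) auto

lemma red_cons_reduced: "reduced w \<Longrightarrow> reduced (red_cons m w)"
proof (cases w)
  case Nil then show ?thesis by simp
next
  case (Cons z zs)
  assume r: "reduced w"
  show ?thesis
  proof (cases "z = inv_letter m")
    case True then show ?thesis using r Cons by (simp add: reduced_tl)
  next
    case False
    then have "z \<noteq> inv_letter m" .
    then show ?thesis using r Cons by simp
  qed
qed

lemma cancel: "reduced w \<Longrightarrow> red_cons (inv_letter m) (red_cons m w) = w"
proof (cases w)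
  case Nil then show ?thesis by simp
next
  case (Cons z zs)
  assume r: "reduced w"
  show ?thesis
  proof (cases "z = inv_letter m")
    case True
    show ?thesis
    proof (cases zs)
      case Nil then show ?thesis using True Cons by simp
    next
      case (Cons u us)
      then have "u \<noteq> m" using r \<open>w = z # zs\<close> True by simp
      then show ?thesis using True Cons \<open>w = z # zs\<close> by simp
    qed
  next
    case False then show ?thesis using Cons by simp
  qed
qed

lemma foldr_reduced: "reduced s \<Longrightarrow> reduced (foldr red_cons a s)"
  by (induction a) (auto intro: red_cons_reduced)

lemma reduce_reduced: "reduced (reduce a)"
  unfolding reduce_def by (rule foldr_reduced) simp

lemma reduce_id: "reduced w \<Longrightarrow> reduce w = w"
proof (induction w)
  case Nil then show ?case by (simp add: reduce_def)
next
  case (Cons x w)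
  have rw: "reduced w" using Cons.prems reduced_tl by blast
  have "reduce (x # w) = red_cons x w" using Cons.IH rw by (simp add: reduce_def)
  also have "\<dots> = x # w" using Cons.prems by (cases w) auto
  finally show ?case .
qed

lemma L: "reduced r \<Longrightarrow> reduced s \<Longrightarrow>
  foldr red_cons (red_cons x r) s = red_cons x (foldr red_cons r s)"
proof (cases r)
  case Nil then show ?thesis by simp
next
  case (Cons z zs)
  assume rr: "reduced r" and rs: "reduced s"
  show ?thesis
  proof (cases "z = inv_letter x")
    case True
    have "reduced (foldr red_cons zs s)" using rs by (rule foldr_reduced)
    then have "red_cons x (red_cons z (foldr red_cons zs s)) = foldr red_cons zs s"
      using cancel[of "foldr red_cons zs s" z] True by simp
    then show ?thesis using True Cons by simp
  next
    case False then show ?thesis using Cons by simp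
  qed
qed

lemma reduce_append: "reduce (a @ b) = foldr red_cons a (reduce b)"
  by (simp add: reduce_def)

lemma coset_eq: "reduced y \<Longrightarrow> H \<subseteq> carrier F2 \<Longrightarrow>
   y <#\<^bsub>F2\<^esub> H = (\<lambda>h. foldr red_cons y h) ` H"
  unfolding l_coset_def F2_def
  by (auto simp: reduce_append reduce_id subset_iff F2_def)

lemma coset_image: assumes "reduced y" "H \<subseteq> carrier F2"
  shows "red_cons m ` (y <#\<^bsub>F2\<^esub> H) = (red_cons m y) <#\<^bsub>F2\<^esub> H"
proof -
  have ry: "reduced (red_cons m y)" using assms(1) by (rule red_cons_reduced)
  have "red_cons m ` (y <#\<^bsub>F2\<^esub> H) = (\<lambda>h. red_cons m (foldr red_cons y h)) ` H"
    using coset_eq[OF assms] by auto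
  also have "\<dots> = (\<lambda>h. foldr red_cons (red_cons m y) h) ` H"
    using L[OF assms(1)] assms(2) by (auto simp: F2_def subset_iff)
  also have "\<dots> = (red_cons m y) <#\<^bsub>F2\<^esub> H" using coset_eq[OF ry assms(2)] by simp
  finally show ?thesis .
qed

lemma coset_sub: "reduced y \<Longrightarrow> H \<subseteq> carrier F2 \<Longrightarrow> y <#\<^bsub>F2\<^esub> H \<subseteq> carrier F2"
  using coset_eq[of y H] by (auto simp: F2_def subset_iff intro: foldr_reduced)

lemma length_red_cons: "length (red_cons m w) =
   (if w \<noteq> [] \<and> hd w = inv_letter m then length w - 1 else length w + 1)"
  by (cases w) auto

lemma finite_sphere: "finite (sphere k)"
proof -
  have "sphere k \<subseteq> {xs. set xs \<subseteq> UNIV \<and> length xs = k}" by (auto simp: sphere_def)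
  moreover have "finite {xs :: letter list. set xs \<subseteq> UNIV \<and> length xs = k}"
    by (rule finite_lists_length_eq) (rule finite_letter)
  ultimately show ?thesis by (rule finite_subset)
qed

lemma inj_red_cons: "inj_on (red_cons m) (carrier F2)"
  by (rule inj_on_inverseI[where g = "red_cons (inv_letter m)"]) (auto simp: F2_def cancel)

lemma count:
  assumes D: "D \<subseteq> carrier F2" and n: "n \<ge> 3"
  shows "(\<Sum>m\<in>UNIV. card (red_cons m ` D \<inter> sphere (n-1)))
          = card (D \<inter> sphere n) + 3 * card (D \<inter> sphere (n-2))"
proof -
  define P where "P m w \<longleftrightarrow> length (red_cons m w) = n - 1" for m w
  define E where "E = D \<inter> sphere n \<union> D \<inter> sphere (n-2)"
  have fE: "finite E" unfolding E_def using finite_sphere by auto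
  have step1: "card (red_cons m ` D \<inter> sphere (n-1)) = card {w\<in>E. P m w}" for m
  proof -
    have "red_cons m ` D \<inter> sphere (n-1) = red_cons m ` {w\<in>E. P m w}"
    proof
      show "red_cons m ` D \<inter> sphere (n-1) \<subseteq> red_cons m ` {w\<in>E. P m w}"
      proof
        fix v assume "v \<in> red_cons m ` D \<inter> sphere (n-1)"
        then obtain w where w: "w \<in> D" "v = red_cons m w" "length v = n - 1" by (auto simp: sphere_def)
        have "length w = n \<or> length w = n - 2" using w n by (auto simp: length_red_cons split: if_splits)
        then have "w \<in> E" using w D by (auto simp: E_def sphere_def)
        then show "v \<in> red_cons m ` {w\<in>E. P m w}" using w by (auto simp: P_def)
      qed
    next
      show "red_cons m ` {w\<in>E. P m w} \<subseteq> red_cons m ` D \<inter> sphere (n-1)"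
        using D by (auto simp: E_def P_def sphere_def F2_def intro: red_cons_reduced)
    qed
    moreover have "inj_on (red_cons m) {w\<in>E. P m w}"
      by (rule inj_on_subset[OF inj_red_cons[of m]]) (use D in \<open>auto simp: E_def\<close>)
    ultimately show ?thesis by (simp add: card_image)
  qed
  have "(\<Sum>m\<in>UNIV. card {w\<in>E. P m w}) = (\<Sum>m\<in>UNIV. \<Sum>w\<in>E. if P m w then 1 else 0)"
  proof (rule sum.cong[OF refl])
    fix m :: letter
    show "card {w\<in>E. P m w} = (\<Sum>w\<in>E. if P m w then 1 else 0)"
    proof -
      have "(\<Sum>w\<in>E. if P m w then 1 else 0) = (\<Sum>w\<in>E \<inter> {w. P m w}. (1::nat)) + (\<Sum>w\<in>E \<inter> - {w. P m w}. 0)"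
        by (rule sum.If_cases[OF fE])
      moreover have "E \<inter> {w. P m w} = {w\<in>E. P m w}" by blast
      ultimately show ?thesis by simp
    qed
  qed
  also have "\<dots> = (\<Sum>w\<in>E. \<Sum>m\<in>UNIV. if P m w then 1 else 0)" by (rule sum.swap)
  also have "\<dots> = (\<Sum>w\<in>E. card {m. P m w})"
    using finite_letter by (simp add: sum.If_cases)
  also have "\<dots> = (\<Sum>w\<in>E. if length w = n then 1 else 3)"
  proof (rule sum.cong[OF refl])
    fix w assume "w \<in> E"
    then have wl: "length w = n \<or> length w = n - 2" by (auto simp: E_def sphere_def)
    have ne: "w \<noteq> []" using wl n by auto
    show "card {m. P m w} = (if length w = n then 1 else 3)"
    proof (cases "length w = n")
      case True
      then have "{m. P m w} = {inv_letter (hd w)}" using ne n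
        by (auto simp: P_def length_red_cons)
      then show ?thesis using True by simp
    next
      case False
      then have l: "length w = n - 2" using wl by simp
      then have "{m. P m w} = UNIV - {inv_letter (hd w)}" using ne n
        by (auto simp: P_def length_red_cons)
      then have "card {m. P m w} = 4 - 1"
        using card_letter finite_letter by (simp add: card_Diff_singleton)
      then show ?thesis using False by simp
    qed
  qed
  also have "\<dots> = card (D \<inter> sphere n) + 3 * card (D \<inter> sphere (n-2))"
  proof -
    have disj: "D \<inter> sphere n \<inter> (D \<inter> sphere (n-2)) = {}" using n by (auto simp: sphere_def)
    have f1: "finite (D \<inter> sphere n)" "finite (D \<inter> sphere (n-2))" using finite_sphere by auto
    have "(\<Sum>w\<in>E. if length w = n then 1 else 3) =
      (\<Sum>w\<in>D \<inter> sphere n. if length w = n then 1 else 3) + (\<Sum>w\<in>D \<inter> sphere (n-2). if length w = n then 1 else (3::nat))"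
      unfolding E_def using sum.union_disjoint[OF f1 disj] by simp
    also have "\<dots> = (\<Sum>w\<in>D \<inter> sphere n. 1) + (\<Sum>w\<in>D \<inter> sphere (n-2). 3)"
      using n by (intro arg_cong2[where f="(+)"] sum.cong) (auto simp: sphere_def)
    finally show ?thesis by simp
  qed
  finally show ?thesis using step1 by simp
qed

theorem theorem1p2:
  fixes H :: "letter list set" and y :: "letter list"
  assumes "subgroup H F2"
    and "finite (left_cosets H)"
    and "\<exists>h\<in>H. odd (length h)"
    and "y \<in> carrier F2"
  shows "\<exists>(c :: nat \<Rightarrow> letter list set \<Rightarrow> real) (N :: nat).
           \<forall>n \<ge> N + 1.
             real (card ((y <#\<^bsub>F2\<^esub> H) \<inter> sphere n)) =
             (\<Sum>i = 1..N. \<Sum>C \<in> left_cosets H. c i C * real (card (C \<inter> sphere (n - i))))"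
proof -
  have Hs: "H \<subseteq> carrier F2" using assms(1) by (rule subgroup.subset)
  have ry: "reduced y" using assms(4) by (simp add: F2_def)
  define D where "D = y <#\<^bsub>F2\<^esub> H"
  define LC where "LC = left_cosets H"
  have fLC: "finite LC" using assms(2) by (simp add: LC_def)
  have DLC: "D \<in> LC" unfolding D_def LC_def left_cosets_def using assms(4) by blast
  have Ds: "D \<subseteq> carrier F2" unfolding D_def using coset_sub[OF ry Hs] .
  define f where "f m = red_cons m ` D" for m
  have fLCm: "f m \<in> LC" for m
  proof -
    have "red_cons m y \<in> carrier F2" using red_cons_reduced[OF ry] by (simp add: F2_def)
    moreover have "f m = red_cons m y <#\<^bsub>F2\<^esub> H"
      unfolding f_def D_def by (rule coset_image[OF ry Hs])
    ultimately show ?thesis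
      unfolding LC_def left_cosets_def mem_Collect_eq
      by (intro exI[of _ "red_cons m y"]) simp
  qed
  define c :: "nat \<Rightarrow> letter list set \<Rightarrow> real" where
    "c i C = (if i = 1 then real (card {m. f m = C}) else if i = 2 \<and> C = D then -3 else 0)" for i C
  have "\<forall>n \<ge> 2 + 1. real (card (D \<inter> sphere n)) =
             (\<Sum>i = 1..2. \<Sum>C \<in> LC. c i C * real (card (C \<inter> sphere (n - i))))"
  proof (intro allI impI)
    fix n :: nat assume n: "n \<ge> 2 + 1"
    define g where "g C = real (card (C \<inter> sphere (n - 1)))" for C
    have s1: "(\<Sum>C \<in> LC. c 1 C * g C) = (\<Sum>m\<in>UNIV. g (f m))"
    proof -
      have "(\<Sum>C \<in> LC. c 1 C * g C) = (\<Sum>C \<in> LC. \<Sum>m\<in>UNIV. if f m = C then g C else 0)"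
        using finite_letter by (simp add: c_def sum.If_cases)
      also have "\<dots> = (\<Sum>m\<in>UNIV. \<Sum>C \<in> LC. if f m = C then g C else 0)" by (rule sum.swap)
      also have "\<dots> = (\<Sum>m\<in>UNIV. g (f m))"
        using fLC fLCm by (simp add: sum.delta)
      finally show ?thesis .
    qed
    have s2: "(\<Sum>C \<in> LC. c 2 C * real (card (C \<inter> sphere (n - 2)))) = - 3 * real (card (D \<inter> sphere (n - 2)))"
    proof -
      have "(\<Sum>C \<in> LC. c 2 C * real (card (C \<inter> sphere (n - 2))))
          = (\<Sum>C \<in> LC. if C = D then - 3 * real (card (D \<inter> sphere (n - 2))) else 0)"
        by (rule sum.cong) (auto simp: c_def)
      then show ?thesis using DLC by (simp only: sum.delta[OF fLC]) simp
    qed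
    have cnt: "(\<Sum>m\<in>UNIV. g (f m)) = real (card (D \<inter> sphere n)) + 3 * real (card (D \<inter> sphere (n-2)))"
    proof -
      have n3: "n \<ge> 3" using n by simp
      have "(\<Sum>m\<in>UNIV. g (f m)) = real (\<Sum>m\<in>UNIV. card (red_cons m ` D \<inter> sphere (n-1)))"
        by (simp add: g_def f_def)
      also have "(\<Sum>m\<in>UNIV. card (red_cons m ` D \<inter> sphere (n-1))) = card (D \<inter> sphere n) + 3 * card (D \<inter> sphere (n-2))"
        by (rule count[OF Ds n3])
      finally show ?thesis by simp
    qed
    have "{1..2::nat} = {1,2}" by auto
    then have "(\<Sum>i = 1..2. \<Sum>C \<in> LC. c i C * real (card (C \<inter> sphere (n - i))))
       = (\<Sum>C \<in> LC. c 1 C * g C) + (\<Sum>C \<in> LC. c 2 C * real (card (C \<inter> sphere (n - 2))))"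
      by (simp add: g_def)
    also have "\<dots> = real (card (D \<inter> sphere n))" using s1 s2 cnt by simp
    finally show "real (card (D \<inter> sphere n)) =
             (\<Sum>i = 1..2. \<Sum>C \<in> LC. c i C * real (card (C \<inter> sphere (n - i))))" by simp
  qed
  then show ?thesis unfolding D_def LC_def by blast
qed

end
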